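(* Let $0\le q\le 1$ and let $\mathcal{H}$ be a real Hilbert space with inner product $\langle\cdot|\cdot\rangle$. Let $\mathcal{F}_q^{disc}(\mathcal{H})$ be the $q$-discrete Fock space, with vacuum vector $\Omega$, and let $C(f)$, $C^+(f)$ ($f\in\mathcal{H}$) be the $q$-discrete annihilation and creation operators and $\widehat{G}(f)=C(f)+C^+(f)$, all as described in the context. Then: (1) for all $f_1,\dots,f_{2n}\in\mathcal{H}$ with $\|f_i\|=1$, $$\langle \widehat{G}(f_1)\cdots\widehat{G}(f_{2n})\Omega\,|\,\Omega\rangle=\sum_{\mathcal{V}\in P_2(2n)} q^{\frac12 ip(\mathcal{V})+cr(\mathcal{V})}\prod_{(i,j)\in\mathcal{V}}\langle f_i|f_j\rangle;$$ (2) for every unit vector $f\in\mathcal{H}$ and every $n\ge1$, $$\int x^{2n}\,d\mu_q^I(x)=\langle \widehat{G}(f)^{2n}\Omega\,|\,\Omega\rangle=[1]_q[3]_q\cdots[2n-1]_q=\sum_{\mathcal{V}\in P_2(2n)}q^{e_0(\mathcal{V})},$$ where $e_0(\mathcal{V})=pbr(\mathcal{V})+2cr(\mathcal{V})=\tfrac12 ip(\mathcal{V})+cr(\mathcal{V})$; (3) for all $f,g\in\mathcal{H}$, $$C(f)C^+(g)-q^2C^+(g)C(f)=q^N\langle f,g\rangle I,$$ where $N$ is the number operator, $N\xi=n\xi$ for $\xi\in\mathcal{H}^{\otimes n}$.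
   Context: Notation: $[n]_q=1+q+\dots+q^{n-1}$. $P_2(2n)$ is the set of pair partitions of $\{1,\dots,2n\}$; a pair $(i,j)\in\mathcal{V}$ is written with $i<j$. For $\mathcal{V}\in P_2(2n)$: $cr(\mathcal{V})=\#\{$pairs of blocks $(a,b),(c,d)\in\mathcal{V}$ with $a<c<b<d\}$ (crossings); $pbr(\mathcal{V})=\#\{$pairs of blocks $(a,b),(c,d)\in\mathcal{V}$ with $a<c<d<b\}$ (nestings); $ip(\mathcal{V})=\sum_{(i,j)\in\mathcal{V}}(j-i-1)$. The $q$-discrete Fock space: on the algebraic full Fock space $\bigoplus_{n\ge0}\mathcal{H}^{\otimes n}$ (with $\mathcal{H}^{\otimes 0}=\mathbb{C}\Omega$, $\|\Omega\|=1$) define the positive semidefinite inner product $$\langle x_1\otimes\cdots\otimes x_n\,|\,y_1\otimes\cdots\otimes y_m\rangle_q=\delta_{n,m}\,q^{\binom n2}\sum_{\pi\in S(n)}q^{inv(\pi)}\langle x_1|y_{\pi(1)}\rangle\cdots\langle x_n|y_{\pi(n)}\rangle,$$ where $inv(\pi)=\#\{i<j:\pi(i)>\pi(j)\}$; $\mathcal{F}_q^{disc}(\mathcal{H})$ is the completion (after quotienting null vectors). Creation: $C^+(f)\xi=f\otimes\xi$ for $\xi\in\mathcal{H}^{\otimes n}$, $C^+(f)\Omega=f$. Annihilation: $C(f)\Omega=0$ and $$C(f)\,x_1\otimes\cdots\otimes x_n=q^{n-1}\sum_{k=1}^n q^{k-1}\langle x_k|f\rangle\, x_1\otimes\cdots\otimes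 \check{x}_k\otimes\cdots\otimes x_n,$$ where $\check{x}_k$ means $x_k$ is omitted; $C(f)$ is the adjoint of $C^+(f)$ for $\langle\cdot|\cdot\rangle_q$. The type I discrete $q$-Hermite polynomials are given by $h_0=1$, $h_1(x)=x$, $xh_n(x)=h_{n+1}(x)+q^{n-1}[n]_q h_{n-1}(x)$; $\mu_q^I$ denotes the probability measure on $\mathbb{R}$ with respect to which they are orthogonal. *)

theory Defs
  imports "HOL-Probability.Probability" "HOL-Combinatorics.Permutations"
begin

definition qint :: "real \<Rightarrow> nat \<Rightarrow> real" where
  "qint q n = (\<Sum>k<n. q ^ k)"

text \<open>A vector of the algebraic full Fock space is represented as a finite formal
  linear combination of elementary tensors x1 (x) ... (x) xn, i.e. a list of pairs
  (coefficient, [x1,...,xn]); the empty list of vectors is the vacuum.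
  Multilinearity relations become null vectors for the q-inner product, so the
  pre-Hilbert space F_q^disc is this space modulo null vectors.\<close>

type_synonym 'a fock = "(real \<times> 'a list) list"

definition vac :: "'a fock" where
  "vac = [(1, [])]"

definition inv_count :: "nat \<Rightarrow> (nat \<Rightarrow> nat) \<Rightarrow> nat" where
  "inv_count n p = card {(i, j). i < j \<and> j < n \<and> p j < p i}"

definition tens_inner :: "real \<Rightarrow> 'a::real_inner list \<Rightarrow> 'a list \<Rightarrow> real" where
  "tens_inner q xs ys =
     (if length xs = length ys then
        q ^ (length xs choose 2) *
        (\<Sum>p \<in> {p. p permutes {..<length xs}}.
            q ^ inv_count (length xs) p * (\<Prod>i<length xs. inner (xs ! i) (ys ! p i)))
      else 0)"

definition fock_inner :: "real \<Rightarrow> 'a::real_inner fock \<Rightarrow> 'a fock \<Rightarrow> real" where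
  "fock_inner q u v = sum_list [c * d * tens_inner q xs ys. (c, xs) \<leftarrow> u, (d, ys) \<leftarrow> v]"

definition fock_null :: "real \<Rightarrow> 'a::real_inner fock \<Rightarrow> bool" where
  "fock_null q u \<longleftrightarrow> fock_inner q u u = 0"

definition fock_scale :: "real \<Rightarrow> 'a fock \<Rightarrow> 'a fock" where
  "fock_scale a u = map (\<lambda>(c, xs). (a * c, xs)) u"

definition fock_add :: "'a fock \<Rightarrow> 'a fock \<Rightarrow> 'a fock" where
  "fock_add u v = u @ v"

definition fock_diff :: "'a fock \<Rightarrow> 'a fock \<Rightarrow> 'a fock" where
  "fock_diff u v = u @ fock_scale (-1) v"

definition cre :: "'a \<Rightarrow> 'a fock \<Rightarrow> 'a fock" where
  "cre f u = map (\<lambda>(c, xs). (c, f # xs)) u"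

text \<open>Annihilation operator C(f): on x1 (x) ... (x) xn gives
  q^(n-1) * sum_{k=1}^n q^(k-1) <x_k|f> x1 ... (omit x_k) ... xn (here k is 0-based).\<close>
definition ann :: "real \<Rightarrow> 'a::real_inner \<Rightarrow> 'a fock \<Rightarrow> 'a fock" where
  "ann q f u = concat (map (\<lambda>(c, xs).
      [(c * q ^ (length xs - 1) * q ^ k * inner (xs ! k) f, take k xs @ drop (Suc k) xs).
         k \<leftarrow> [0..<length xs]]) u)"

definition Ghat :: "real \<Rightarrow> 'a::real_inner \<Rightarrow> 'a fock \<Rightarrow> 'a fock" where
  "Ghat q f u = fock_add (ann q f u) (cre f u)"

definition qN :: "real \<Rightarrow> 'a fock \<Rightarrow> 'a fock" where
  "qN q u = map (\<lambda>(c, xs). (q ^ length xs * c, xs)) u"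

definition pair_partitions :: "nat \<Rightarrow> (nat \<times> nat) set set" where
  "pair_partitions m = {V. V \<subseteq> {(i, j). 1 \<le> i \<and> i < j \<and> j \<le> m} \<and>
       (\<forall>k\<in>{1..m}. \<exists>!p\<in>V. k = fst p \<or> k = snd p)}"

definition cr :: "(nat \<times> nat) set \<Rightarrow> nat" where
  "cr V = card {((a, b), (c, d)). (a, b) \<in> V \<and> (c, d) \<in> V \<and> a < c \<and> c < b \<and> b < d}"

definition pbr :: "(nat \<times> nat) set \<Rightarrow> nat" where
  "pbr V = card {((a, b), (c, d)). (a, b) \<in> V \<and> (c, d) \<in> V \<and> a < c \<and> c < d \<and> d < b}"

definition ip :: "(nat \<times> nat) set \<Rightarrow> nat" where
  "ip V = (\<Sum>(i, j)\<in>V. j - i - 1)"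

fun hermI :: "real \<Rightarrow> nat \<Rightarrow> real \<Rightarrow> real" where
  "hermI q 0 x = 1"
| "hermI q (Suc 0) x = x"
| "hermI q (Suc (Suc n)) x = x * hermI q (Suc n) x - q ^ n * qint q (Suc n) * hermI q n x"

definition is_muI :: "real \<Rightarrow> real measure \<Rightarrow> bool" where
  "is_muI q \<mu> \<longleftrightarrow> prob_space \<mu> \<and> sets \<mu> = sets borel \<and>
     (\<forall>k. integrable \<mu> (\<lambda>x. x ^ k)) \<and>
     (\<forall>m n. m \<noteq> n \<longrightarrow> (\<integral>x. hermI q m x * hermI q n x \<partial>\<mu>) = 0)"

end

theory Submission
  imports Defs
begin

definition lin :: "('a list \<Rightarrow> real) \<Rightarrow> 'a fock \<Rightarrow> real" where
  "lin T u = sum_list (map (\<lambda>(c, xs). c * T xs) u)"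

lemma lin_Nil[simp]: "lin T [] = 0" by (simp add: lin_def)
lemma lin_Cons[simp]: "lin T ((c,xs) # u) = c * T xs + lin T u" by (simp add: lin_def)
lemma lin_append[simp]: "lin T (u @ v) = lin T u + lin T v" by (simp add: lin_def)
lemma lin_single: "lin T [(1,xs)] = T xs" by simp

lemma lin_ann: "lin T (ann q f u) = lin (\<lambda>xs. \<Sum>k<length xs. q ^ (length xs - 1) * q ^ k * inner (xs ! k) f * T (take k xs @ drop (Suc k) xs)) u"
proof (induction u)
  case Nil then show ?case by (simp add: ann_def)
next
  case (Cons a u)
  obtain c xs where a: "a = (c,xs)" by force
  have "ann q f (a # u) = [(c * q ^ (length xs - 1) * q ^ k * inner (xs ! k) f, take k xs @ drop (Suc k) xs). k \<leftarrow> [0..<length xs]] @ ann q f u"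
    by (simp add: ann_def a)
  moreover have "lin T [(c * q ^ (length xs - 1) * q ^ k * inner (xs ! k) f, take k xs @ drop (Suc k) xs). k \<leftarrow> [0..<length xs]]
     = c * (\<Sum>k<length xs. q ^ (length xs - 1) * q ^ k * inner (xs ! k) f * T (take k xs @ drop (Suc k) xs))"
    by (simp add: lin_def sum_list_map_eq_sum_count2 o_def sum_distrib_left mult.assoc atLeast0LessThan[symmetric] sum_list_sum_nth cong: map_cong)
  ultimately show ?case using Cons by (simp add: a)
qed

lemma lin_cre: "lin T (cre g u) = lin (\<lambda>xs. T (g # xs)) u"
  by (induction u) (auto simp: cre_def)

lemma lin_scale: "lin T (fock_scale a u) = a * lin T u"
  by (induction u) (auto simp: fock_scale_def algebra_simps)

lemma lin_qN: "lin T (qN q u) = lin (\<lambda>xs. q ^ length xs * T xs) u"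
  by (induction u) (auto simp: qN_def algebra_simps)

lemma lin_add: "lin (\<lambda>xs. S xs + T xs) u = lin S u + lin T u"
  by (induction u) (auto simp: algebra_simps)

lemma lin_diff: "lin (\<lambda>xs. S xs - T xs) u = lin S u - lin T u"
  by (induction u) (auto simp: algebra_simps)

lemma lin_cmult: "lin (\<lambda>xs. a * T xs) u = a * lin T u"
  by (induction u) (auto simp: algebra_simps)

lemma lin_cong: "(\<And>xs. T xs = S xs) \<Longrightarrow> lin T u = lin S u"
  by metis

lemma sum_list_split_cmult: "(\<Sum>(d, ys)\<leftarrow>v. a * d * (t ys::real)) = a * (\<Sum>(d, ys)\<leftarrow>v. d * t ys)"
  by (induction v) (auto simp: algebra_simps)

lemma fock_inner_lin: "fock_inner q u v = lin (\<lambda>xs. fock_inner q [(1,xs)] v) u"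
  by (induction u) (auto simp: fock_inner_def sum_list_split_cmult)

definition om :: "'a list \<Rightarrow> real" where "om xs = (if xs = [] then 1 else 0)"

lemma tens_inner_Nil: "tens_inner q xs [] = om xs"
  by (simp add: tens_inner_def om_def inv_count_def binomial_eq_0)

lemma fock_inner_vac: "fock_inner q u vac = lin om u"
  by (subst fock_inner_lin) (simp add: vac_def fock_inner_def tens_inner_Nil)

lemma lin_zero: "(\<And>T. lin T w = 0) \<Longrightarrow> fock_null q w"
  unfolding fock_null_def by (subst fock_inner_lin) simp

lemma comm_pointwise:
  fixes xs :: "'a::real_inner list"
  shows "(\<Sum>k<length (g # xs). q ^ (length (g # xs) - 1) * q ^ k * inner ((g # xs) ! k) f * T (take k (g # xs) @ drop (Suc k) (g # xs)))
    - q^2 * (\<Sum>k<length xs. q ^ (length xs - 1) * q ^ k * inner (xs ! k) f * T (g # (take k xs @ drop (Suc k) xs)))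
    - inner f g * (q ^ length xs * T xs) = 0"
proof -
  have "(\<Sum>k<length (g # xs). q ^ (length (g # xs) - 1) * q ^ k * inner ((g # xs) ! k) f * T (take k (g # xs) @ drop (Suc k) (g # xs)))
     = q ^ length xs * inner g f * T xs + (\<Sum>k<length xs. q ^ length xs * q ^ Suc k * inner (xs ! k) f * T (g # (take k xs @ drop (Suc k) xs)))"
    by (simp only: length_Cons sum.lessThan_Suc_shift) simp
  moreover have "q^2 * (\<Sum>k<length xs. q ^ (length xs - 1) * q ^ k * inner (xs ! k) f * T (g # (take k xs @ drop (Suc k) xs)))
     = (\<Sum>k<length xs. q ^ length xs * q ^ Suc k * inner (xs ! k) f * T (g # (take k xs @ drop (Suc k) xs)))"
  proof (cases xs)
    case Nil then show ?thesis by simp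
  next
    case (Cons y ys)
    show ?thesis unfolding sum_distrib_left
      by (rule sum.cong) (simp_all add: Cons power2_eq_square)
  qed
  ultimately show ?thesis by (simp add: inner_commute)
qed

lemma part3:
  fixes f g :: "'a::real_inner" and u :: "'a fock"
  shows "fock_null q (fock_diff (fock_diff (ann q f (cre g u)) (fock_scale (q^2) (cre g (ann q f u))))
                     (fock_scale (inner f g) (qN q u)))"
proof (rule lin_zero)
  fix T :: "'a list \<Rightarrow> real"
  have "lin T (fock_diff (fock_diff (ann q f (cre g u)) (fock_scale (q^2) (cre g (ann q f u))))
                     (fock_scale (inner f g) (qN q u)))
     = lin T (ann q f (cre g u)) - q^2 * lin T (cre g (ann q f u)) - inner f g * lin T (qN q u)"
    by (simp add: fock_diff_def lin_scale)
  also have "\<dots> = lin (\<lambda>xs. (\<Sum>k<length (g # xs). q ^ (length (g # xs) - 1) * q ^ k * inner ((g # xs) ! k) f * T (take k (g # xs) @ drop (Suc k) (g # xs)))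
    - q^2 * (\<Sum>k<length xs. q ^ (length xs - 1) * q ^ k * inner (xs ! k) f * T (g # (take k xs @ drop (Suc k) xs)))
    - inner f g * (q ^ length xs * T xs)) u"
    unfolding lin_ann lin_cre lin_qN lin_diff lin_cmult by (rule refl)
  also have "\<dots> = 0" unfolding comm_pointwise by (induction u) auto
  finally show "lin T (fock_diff (fock_diff (ann q f (cre g u)) (fock_scale (q^2) (cre g (ann q f u))))
                     (fock_scale (inner f g) (qN q u))) = 0" .
qed

definition linop :: "('a::real_inner fock \<Rightarrow> 'a fock) \<Rightarrow> bool" where
  "linop A \<longleftrightarrow> (\<forall>T u. lin T (A u) = lin (\<lambda>xs. lin T (A [(1,xs)])) u)"

lemma linop_Ghat: "linop (Ghat q g)"
  unfolding linop_def
proof (intro allI)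
  fix T u
  show "lin T (Ghat q g u) = lin (\<lambda>xs. lin T (Ghat q g [(1,xs)])) u"
    unfolding Ghat_def fock_add_def lin_append lin_ann lin_cre
    by (simp add: lin_add)
qed

lemma linop_comp: "linop A \<Longrightarrow> linop B \<Longrightarrow> linop (\<lambda>u. A (B u))"
  unfolding linop_def
proof (intro allI)
  fix T u
  assume a: "\<forall>T u. lin T (A u) = lin (\<lambda>xs. lin T (A [(1, xs)])) u"
    and b: "\<forall>T u. lin T (B u) = lin (\<lambda>xs. lin T (B [(1, xs)])) u"
  have "lin T (A (B u)) = lin (\<lambda>xs. lin T (A [(1, xs)])) (B u)" using a by blast
  also have "\<dots> = lin (\<lambda>ys. lin (\<lambda>xs. lin T (A [(1, xs)])) (B [(1,ys)])) u" using b by blast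
  also have "\<dots> = lin (\<lambda>ys. lin T (A (B [(1,ys)]))) u"
  proof (rule lin_cong)
    fix ys show "lin (\<lambda>xs. lin T (A [(1, xs)])) (B [(1, ys)]) = lin T (A (B [(1, ys)]))"
      using a[rule_format, of T "B [(1,ys)]"] by simp
  qed
  finally show "lin T (A (B u)) = lin (\<lambda>xs. lin T (A (B [(1, xs)]))) u" .
qed

lemma linop_id: "linop (\<lambda>u. u)"
  unfolding linop_def by simp

lemma linop_funpow: "linop A \<Longrightarrow> linop (A ^^ n)"
proof (induction n)
  case 0 then show ?case using linop_id by (simp add: id_def)
next
  case (Suc n)
  have "linop (\<lambda>u. A ((A ^^ n) u))" by (rule linop_comp[OF Suc.prems Suc.IH[OF Suc.prems]])
  then show ?case by (simp add: o_def)
qed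

definition Phi :: "real \<Rightarrow> (nat \<Rightarrow> 'a::real_inner) \<Rightarrow> nat \<Rightarrow> 'a fock \<Rightarrow> 'a fock" where
  "Phi q f m u = foldr (Ghat q) (map f [1..<m+1]) u"

lemma Phi_0: "Phi q f 0 u = u" by (simp add: Phi_def)

lemma Phi_Suc: "Phi q f (Suc m) u = Phi q f m (Ghat q (f (Suc m)) u)"
  by (simp add: Phi_def)

lemma linop_Phi: "linop (Phi q f m)"
proof (induction m)
  case 0 then show ?case using linop_id by (simp add: Phi_0)
next
  case (Suc m)
  have "linop (\<lambda>u. Phi q f m (Ghat q (f (Suc m)) u))" by (rule linop_comp[OF Suc.IH linop_Ghat])
  then show ?case by (simp add: Phi_Suc[abs_def])
qed

lemma lin_Ghat_single: "lin T (Ghat q g [(1,xs)]) =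
   (\<Sum>k<length xs. q ^ (length xs - 1) * q ^ k * inner (xs ! k) g * T (take k xs @ drop (Suc k) xs)) + T (g # xs)"
  unfolding Ghat_def fock_add_def lin_append lin_ann lin_cre by simp

definition W :: "real \<Rightarrow> (nat \<Rightarrow> 'a::real_inner) \<Rightarrow> nat \<Rightarrow> 'a list \<Rightarrow> real" where
  "W q f m xs = lin om (Phi q f m [(1,xs)])"

lemma W_0: "W q f 0 xs = om xs" by (simp add: W_def Phi_0)

lemma W_Suc: "W q f (Suc m) xs =
   (\<Sum>k<length xs. q ^ (length xs - 1) * q ^ k * inner (xs ! k) (f (Suc m)) * W q f m (take k xs @ drop (Suc k) xs)) + W q f m (f (Suc m) # xs)"
proof -
  have "W q f (Suc m) xs = lin om (Phi q f m (Ghat q (f (Suc m)) [(1,xs)]))" by (simp add: W_def Phi_Suc)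
  also have "\<dots> = lin (W q f m) (Ghat q (f (Suc m)) [(1,xs)])"
    using linop_Phi[of q f m] unfolding linop_def W_def by metis
  also have "\<dots> = (\<Sum>k<length xs. q ^ (length xs - 1) * q ^ k * inner (xs ! k) (f (Suc m)) * W q f m (take k xs @ drop (Suc k) xs)) + W q f m (f (Suc m) # xs)"
    by (rule lin_Ghat_single)
  finally show ?thesis .
qed

definition Y :: "real \<Rightarrow> 'a::real_inner \<Rightarrow> nat \<Rightarrow> nat \<Rightarrow> real" where
  "Y q f m k = lin om ((Ghat q f ^^ m) [(1, replicate k f)])"

lemma Y_0: "Y q f 0 k = (if k = 0 then 1 else 0)"
  by (simp add: Y_def om_def)

lemma qint_0[simp]: "qint q 0 = 0" by (simp add: qint_def)
lemma qint_Suc: "qint q (Suc n) = qint q n + q ^ n" by (simp add: qint_def)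

lemma del_replicate: "j < k \<Longrightarrow> take j (replicate k x) @ drop (Suc j) (replicate k x) = replicate (k - 1) x"
proof -
  assume "j < k"
  then have "replicate (k - 1) x = replicate j x @ replicate (k - Suc j) x"
    by (simp add: replicate_add[symmetric])
  then show ?thesis using \<open>j < k\<close> by (simp add: take_replicate drop_replicate)
qed

lemma allE2: "\<forall>x y. P x y \<Longrightarrow> P a b" by blast

lemma rep_app: "j < k \<Longrightarrow> replicate j x @ replicate (k - Suc j) x = replicate (k - Suc 0) x"
  by (simp add: replicate_add[symmetric])

lemma Y_Suc:
  assumes "norm f = 1"
  shows "Y q f (Suc m) k = q ^ (k - 1) * qint q k * Y q f m (k - 1) + Y q f m (Suc k)"
proof -
  have ff: "inner f f = 1" using assms by (simp add: power2_norm_eq_inner[symmetric])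
  have "Y q f (Suc m) k = lin om ((Ghat q f ^^ m) (Ghat q f [(1, replicate k f)]))"
    unfolding Y_def funpow_Suc_right o_def by (rule refl)
  also have "\<dots> = lin (\<lambda>xs. lin om ((Ghat q f ^^ m) [(1,xs)])) (Ghat q f [(1, replicate k f)])"
    using linop_funpow[OF linop_Ghat[of q f], of m] unfolding linop_def by (rule allE2)
  also have "\<dots> = (\<Sum>j<k. q ^ (k - 1) * q ^ j * Y q f m (k - 1)) + Y q f m (Suc k)"
    unfolding lin_Ghat_single by (intro arg_cong2[where f="(+)"] sum.cong) (simp_all add: Y_def ff rep_app)
  also have "\<dots> = q ^ (k - 1) * qint q k * Y q f m (k - 1) + Y q f m (Suc k)"
    by (simp add: qint_def sum_distrib_left sum_distrib_right)
  finally show ?thesis .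
qed

definition qfact :: "real \<Rightarrow> nat \<Rightarrow> real" where "qfact q n = (\<Prod>i\<in>{1..n}. qint q i)"
definition Dd :: "real \<Rightarrow> nat \<Rightarrow> real" where "Dd q j = (\<Prod>i\<in>{1..j}. qint q (2*i-1))"
definition Bb :: "real \<Rightarrow> nat \<Rightarrow> real" where "Bb q k = (\<Prod>i\<in>{1..k}. q ^ (i - 1) * qint q i)"

lemma qfact_0[simp]: "qfact q 0 = 1" by (simp add: qfact_def)
lemma qfact_Suc: "qfact q (Suc n) = qfact q n * qint q (Suc n)" by (simp add: qfact_def prod.nat_ivl_Suc')
lemma Dd_0[simp]: "Dd q 0 = 1" by (simp add: Dd_def)
lemma Dd_Suc: "Dd q (Suc n) = Dd q n * qint q (2*n+1)" by (simp add: Dd_def prod.nat_ivl_Suc')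
lemma Bb_0[simp]: "Bb q 0 = 1" by (simp add: Bb_def)
lemma Bb_Suc: "Bb q (Suc n) = Bb q n * (q ^ n * qint q (Suc n))" by (simp add: Bb_def prod.nat_ivl_Suc')

lemma qint_pos: "0 \<le> q \<Longrightarrow> 0 < n \<Longrightarrow> 1 \<le> qint q n"
proof (induction n)
  case 0 then show ?case by simp
next
  case (Suc n)
  show ?case
  proof (cases n)
    case 0 then show ?thesis by (simp add: qint_def)
  next
    case (Suc n')
    then have "1 \<le> qint q n" using Suc.IH Suc.prems by simp
    moreover have "0 \<le> q ^ n" using Suc.prems by simp
    ultimately show ?thesis by (simp add: qint_Suc)
  qed
qed

lemma qfact_pos: assumes "0 \<le> q" shows "0 < qfact q n"
  unfolding qfact_def
proof (rule prod_pos)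
  fix i assume "i \<in> {1..n}"
  then have "1 \<le> qint q i" using assms by (intro qint_pos) auto
  then show "0 < qint q i" by linarith
qed

lemma qint_add: "qint q (a + b) = qint q a + q ^ a * qint q b"
proof (induction b)
  case 0 then show ?case by simp
next
  case (Suc b)
  have "qint q (a + Suc b) = qint q (a + b) + q ^ (a + b)" by (simp add: qint_Suc)
  also have "\<dots> = qint q a + q ^ a * (qint q b + q ^ b)" by (simp add: Suc.IH power_add algebra_simps)
  finally show ?case by (simp add: qint_Suc)
qed

definition cf :: "real \<Rightarrow> nat \<Rightarrow> nat \<Rightarrow> real" where
  "cf q m k = (if k \<le> m \<and> even (m - k) then qfact q m / (qfact q (m - k) * qfact q k) * Dd q ((m - k) div 2) * Bb q k else 0)"

lemma cf_eq: "m = k + 2 * j \<Longrightarrow> cf q m k = qfact q m / (qfact q (2*j) * qfact q k) * Dd q j * Bb q k"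
  by (simp add: cf_def)

lemma cf_zero: "\<not> (k \<le> m \<and> even (m - k)) \<Longrightarrow> cf q m k = 0"
  unfolding cf_def by (rule if_not_P)

lemma alg1: "(a::real) \<noteq> 0 \<Longrightarrow> F \<noteq> 0 \<Longrightarrow> G \<noteq> 0 \<Longrightarrow> p * a * (X / (G * F) * D * B) = a * (X / (G * (F * a)) * D * (B * (p * a)))"
  by (simp add: field_simps)

lemma alg2: "(G::real) > 0 \<Longrightarrow> a > 0 \<Longrightarrow> b > 0 \<Longrightarrow> F > 0 \<Longrightarrow> c > 0 \<Longrightarrow>
   A * (s + p * b) / (G * a * b * F) * (D * a) * B = s * (A / (G * a * b * F) * (D * a) * B) + A / (G * (F * c)) * D * (B * (p * c))"
  by (simp add: field_simps)

lemma cf_Suc: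
  assumes q: "0 \<le> q"
  shows "cf q (Suc m) k = q ^ (k - 1) * qint q k * cf q m (k - 1) + cf q m (Suc k)"
proof (cases "k \<le> Suc m \<and> even (Suc m - k)")
  case False
  have 1: "cf q (Suc m) k = 0" using False by (rule cf_zero)
  have 2: "cf q m (Suc k) = 0" using False by (intro cf_zero) auto
  have 3: "qint q k * cf q m (k - 1) = 0"
  proof (cases k)
    case 0 then show ?thesis by simp
  next
    case (Suc k') then show ?thesis using False by (simp add: cf_zero)
  qed
  show ?thesis using 1 2 3 by simp
next
  case True
  then obtain j where j: "Suc m = k + 2 * j" by (metis dvd_def le_add_diff_inverse)
  show ?thesis
  proof (cases j)
    case 0
    then have k: "k = Suc m" using j by simp
    have a: "cf q (Suc m) (Suc m) = Bb q (Suc m)" using qfact_pos[OF q, of "Suc m"] by (simp add: cf_def)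
    have b: "cf q m m = Bb q m" using qfact_pos[OF q, of m] by (simp add: cf_def)
    have c: "cf q m (Suc (Suc m)) = 0" by (rule cf_zero) simp
    show ?thesis using k a b c by (simp add: Bb_Suc)
  next
    case (Suc i)
    define M where "M = k + 2 * i + 1"
    have mM: "m = M" using j Suc M_def by simp
    have X1: "cf q (Suc M) k = qfact q (Suc M) / (qfact q (2*i+2) * qfact q k) * Dd q (Suc i) * Bb q k"
      using cf_eq[of "Suc M" k "Suc i" q] by (simp add: M_def)
    have X3: "cf q M (Suc k) = qfact q M / (qfact q (2*i) * qfact q (Suc k)) * Dd q i * Bb q (Suc k)"
      using cf_eq[of M "Suc k" i q] by (simp add: M_def)
    have X2: "q ^ (k - 1) * qint q k * cf q M (k - 1) = qint q k * (qfact q M / (qfact q (2*i+2) * qfact q k) * Dd q (Suc i) * Bb q k)"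
    proof (cases k)
      case 0 then show ?thesis by simp
    next
      case (Suc k')
      have "cf q M k' = qfact q M / (qfact q (2*i+2) * qfact q k') * Dd q (Suc i) * Bb q k'"
        using cf_eq[of M k' "Suc i" q] by (simp add: M_def Suc)
      moreover have "qint q (Suc k') \<noteq> 0" using qint_pos[OF q, of "Suc k'"] by simp
      moreover have "qfact q k' \<noteq> 0" "qfact q (2*i+2) \<noteq> 0" using qfact_pos[OF q] by (simp_all add: less_imp_neq[symmetric])
      ultimately show ?thesis unfolding Suc qfact_Suc Bb_Suc diff_Suc_1
        using alg1[of "qint q (Suc k')" "qfact q k'" "qfact q (2*i+2)" "q ^ k'" "qfact q M" "Dd q (Suc i)" "Bb q k'"] by simp
    qed
    have F2: "qfact q (2*i+2) = qfact q (2*i) * qint q (2*i+1) * qint q (2*i+2)"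
      by (simp add: qfact_Suc[symmetric] numeral_eq_Suc)
    have F6: "qint q (Suc M) = qint q k + q ^ k * qint q (2*i+2)"
      by (simp add: M_def qint_add[symmetric] add.assoc)
    have pos: "qfact q (2*i) > 0" "qfact q k > 0" "qint q (2*i+1) > 0" "qint q (2*i+2) > 0" "qint q (Suc k) > 0"
      using qfact_pos[OF q] qint_pos[OF q] by (auto intro: less_le_trans[of 0 1])
    show ?thesis unfolding mM X1 X2 X3 F2 qfact_Suc[of q M] F6 Dd_Suc qfact_Suc[of q k] Bb_Suc
      using pos alg2[of "qfact q (2*i)" "qint q (2*i+1)" "qint q (2*i+2)" "qfact q k" "qint q (Suc k)" "qfact q M" "qint q k" "q^k" "Dd q i" "Bb q k"] by simp
  qed
qed

lemma Y_cf:
  assumes "norm f = 1" "0 \<le> q"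
  shows "Y q f m k = cf q m k"
proof (induction m arbitrary: k)
  case 0 then show ?case by (simp add: Y_0 cf_def)
next
  case (Suc m) then show ?case by (simp add: Y_Suc[OF assms(1)] cf_Suc[OF assms(2)])
qed

lemma fock_moment:
  assumes "norm f = 1" "0 \<le> q"
  shows "fock_inner q ((Ghat q f ^^ (2*n)) vac) vac = (\<Prod>k\<in>{1..n}. qint q (2*k - 1))"
proof -
  have "fock_inner q ((Ghat q f ^^ (2*n)) vac) vac = Y q f (2*n) 0"
    unfolding fock_inner_vac by (simp add: Y_def vac_def)
  also have "\<dots> = cf q (2*n) 0" by (rule Y_cf[OF assms])
  also have "\<dots> = Dd q n" using qfact_pos[OF assms(2), of "2*n"] by (simp add: cf_def)
  finally show ?thesis by (simp add: Dd_def)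
qed

definition goodf :: "real measure \<Rightarrow> (real \<Rightarrow> real) \<Rightarrow> bool" where
  "goodf M g \<longleftrightarrow> (\<forall>m. integrable M (\<lambda>x. x ^ m * g x))"

lemma goodf_x: "goodf M g \<Longrightarrow> goodf M (\<lambda>x. x * g x)"
  unfolding goodf_def
proof
  fix m assume "\<forall>m. integrable M (\<lambda>x. x ^ m * g x)"
  then have "integrable M (\<lambda>x. x ^ Suc m * g x)" by blast
  then show "integrable M (\<lambda>x. x ^ m * (x * g x))" by (simp add: algebra_simps)
qed

lemma goodf_diff: "goodf M g \<Longrightarrow> goodf M h \<Longrightarrow> goodf M (\<lambda>x. g x - c * h x)"
  unfolding goodf_def
proof
  fix m assume a: "\<forall>m. integrable M (\<lambda>x. x ^ m * g x)" "\<forall>m. integrable M (\<lambda>x. x ^ m * h x)"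
  have i1: "integrable M (\<lambda>x. x ^ m * g x)" using a by blast
  have i2: "integrable M (\<lambda>x. c * (x ^ m * h x))" using a by (intro integrable_mult_right) blast
  have "integrable M (\<lambda>x. x ^ m * g x - c * (x ^ m * h x))"
    by (rule Bochner_Integration.integrable_diff[OF i1 i2])
  then show "integrable M (\<lambda>x. x ^ m * (g x - c * h x))" by (simp add: algebra_simps)
qed

lemma herm_x: "x * hermI q k x = hermI q (Suc k) x + q ^ (k - 1) * qint q k * hermI q (k - 1) x"
  by (cases k) simp_all

lemma aux_x: "x ^ Suc m * hermI q k x = x ^ m * hermI q (Suc k) x + q ^ (k - 1) * qint q k * (x ^ m * hermI q (k - 1) x)"
proof -
  have "x ^ Suc m * hermI q k x = x ^ m * (x * hermI q k x)" by simp
  then show ?thesis unfolding herm_x by (simp add: algebra_simps)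
qed

lemma goodf_herm:
  assumes "\<forall>k. integrable M (\<lambda>x. x ^ k)"
  shows "goodf M (hermI q k)"
proof -
  have g0': "goodf M (\<lambda>x. 1)" using assms by (simp add: goodf_def)
  have g0: "goodf M (hermI q 0)" using g0' by (simp add: hermI.simps(1)[abs_def])
  have "goodf M (hermI q n) \<and> goodf M (hermI q (Suc n))" for n
  proof (induction n)
    case 0
    have "goodf M (\<lambda>x. x * hermI q 0 x)" by (rule goodf_x[OF g0])
    then have "goodf M (\<lambda>x. x)" by simp
    then show ?case using g0 g0' by (simp add: hermI.simps(2)[abs_def])
  next
    case (Suc n)
    have "goodf M (\<lambda>x. x * hermI q (Suc n) x - (q ^ n * qint q (Suc n)) * hermI q n x)"
      using Suc by (intro goodf_diff goodf_x) auto
    then show ?case using Suc by simp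
  qed
  then show ?thesis by blast
qed

definition Im :: "real measure \<Rightarrow> real \<Rightarrow> nat \<Rightarrow> nat \<Rightarrow> real" where
  "Im M q m k = (\<integral>x. x ^ m * hermI q k x \<partial>M)"

lemma Im_cf:
  assumes mu: "is_muI q \<mu>" and q: "0 \<le> q"
  shows "Im \<mu> q m k = cf q m k"
proof (induction m arbitrary: k)
  case 0
  have ps: "prob_space \<mu>" and orth: "\<And>m n. m \<noteq> n \<Longrightarrow> (\<integral>x. hermI q m x * hermI q n x \<partial>\<mu>) = 0"
    using mu by (auto simp: is_muI_def)
  show ?case
  proof (cases k)
    case 0
    then show ?thesis using prob_space.prob_space[OF ps] by (simp add: Im_def cf_def)
  next
    case (Suc k')
    then show ?thesis using orth[of k 0] by (simp add: Im_def cf_def)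
  qed
next
  case (Suc m)
  have ints: "\<forall>k. integrable \<mu> (\<lambda>x. x ^ k)" using mu by (simp add: is_muI_def)
  have g: "\<And>j. integrable \<mu> (\<lambda>x. x ^ m * hermI q j x)" using goodf_herm[OF ints] by (simp add: goodf_def)
  have "Im \<mu> q (Suc m) k = (\<integral>x. x ^ m * hermI q (Suc k) x + q ^ (k - 1) * qint q k * (x ^ m * hermI q (k - 1) x) \<partial>\<mu>)"
    unfolding Im_def by (rule Bochner_Integration.integral_cong[OF refl aux_x])
  also have "\<dots> = Im \<mu> q m (Suc k) + q ^ (k - 1) * qint q k * Im \<mu> q m (k - 1)"
    using g by (simp add: Im_def)
  finally show ?case using Suc.IH cf_Suc[OF q] by simp
qed

lemma moment_eq:
  assumes mu: "is_muI q \<mu>" and q: "0 \<le> q" and f: "norm f = 1"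
  shows "(\<integral>x. x ^ (2*n) \<partial>\<mu>) = fock_inner q ((Ghat q f ^^ (2*n)) vac) vac"
proof -
  have "(\<integral>x. x ^ (2*n) \<partial>\<mu>) = Im \<mu> q (2*n) 0" by (simp add: Im_def)
  also have "\<dots> = cf q (2*n) 0" by (rule Im_cf[OF mu q])
  also have "\<dots> = Y q f (2*n) 0" by (rule Y_cf[OF f q, symmetric])
  also have "\<dots> = fock_inner q ((Ghat q f ^^ (2*n)) vac) vac"
    unfolding fock_inner_vac by (simp add: Y_def vac_def)
  finally show ?thesis .
qed

definition Box :: "nat \<Rightarrow> nat set \<Rightarrow> (nat \<times> nat) set" where
  "Box m J = {(i, j). 1 \<le> i \<and> i < j \<and> i \<le> m \<and> (j \<le> m \<or> j \<in> J)}"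

definition P :: "nat \<Rightarrow> nat set \<Rightarrow> (nat \<times> nat) set set" where
  "P m J = {V. V \<subseteq> Box m J \<and> (\<forall>k\<in>{1..m} \<union> J. \<exists>!p\<in>V. k = fst p \<or> k = snd p)}"

lemma Box_sub: "Box m J \<subseteq> {1..m} \<times> ({1..m} \<union> J)"
  unfolding Box_def by auto

lemma finite_Box: "finite J \<Longrightarrow> finite (Box m J)"
  by (rule finite_subset[OF Box_sub]) auto

lemma finite_P: "finite J \<Longrightarrow> finite (P m J)"
  by (rule finite_subset[of _ "Pow (Box m J)"]) (auto simp: P_def finite_Box)

lemma finite_P_mem: "finite J \<Longrightarrow> V \<in> P m J \<Longrightarrow> finite V"
  unfolding P_def using finite_Box finite_subset by blast

lemma P_0: "P 0 J = (if J = {} then {{}} else {})"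
proof -
  have B: "Box 0 J = {}" by (auto simp: Box_def)
  show ?thesis by (auto simp: P_def B)
qed

lemma P_dec1:
  assumes J: "\<forall>x\<in>J. Suc m' < x" and V: "V \<in> P (Suc m') J"
  shows "V \<in> (\<Union>j\<in>J. insert (Suc m', j) ` P m' (J - {j})) \<union> P m' (insert (Suc m') J)"
proof -
  let ?m = "Suc m'"
  have sub: "V \<subseteq> Box ?m J" and cov: "\<forall>k\<in>{1..?m} \<union> J. \<exists>!p\<in>V. k = fst p \<or> k = snd p"
    using V by (auto simp: P_def)
  have "?m \<in> {1..?m} \<union> J" by simp
  then obtain p where p: "p \<in> V" "?m = fst p \<or> ?m = snd p"
     and uniq: "\<And>p'. p' \<in> V \<Longrightarrow> ?m = fst p' \<or> ?m = snd p' \<Longrightarrow> p' = p"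
    using cov by metis
  have pB: "p \<in> Box ?m J" using p sub by blast
  show ?thesis
  proof (cases "fst p = ?m")
    case True
    define j where "j = snd p"
    have pj: "p = (?m, j)" using True j_def by (cases p) auto
    have jJ: "j \<in> J" and jm: "?m < j" using pB pj by (auto simp: Box_def)
    have uj: "\<And>p'. p' \<in> V \<Longrightarrow> j = fst p' \<or> j = snd p' \<Longrightarrow> p' = p"
    proof -
      fix p' assume "p' \<in> V" "j = fst p' \<or> j = snd p'"
      moreover have "j \<in> {1..?m} \<union> J" using jJ by simp
      ultimately show "p' = p" using cov p(1) pj by (metis snd_conv)
    qed
    define V' where "V' = V - {p}"
    have "V' \<in> P m' (J - {j})"
      unfolding P_def
    proof (intro CollectI conjI ballI subsetI)
      fix x assume x: "x \<in> V'"
      then have xV: "x \<in> V" and xp: "x \<noteq> p" by (auto simp: V'_def)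
      have xB: "x \<in> Box ?m J" using xV sub by blast
      have "fst x \<noteq> ?m" "snd x \<noteq> ?m" using uniq[OF xV] xp by auto
      moreover have "fst x \<noteq> j" "snd x \<noteq> j" using uj[OF xV] xp by auto
      ultimately show "x \<in> Box m' (J - {j})" using xB by (auto simp: Box_def)
    next
      fix k assume k: "k \<in> {1..m'} \<union> (J - {j})"
      then have k': "k \<in> {1..?m} \<union> J" by auto
      have km: "k \<noteq> ?m" "k \<noteq> j" using k J jm by auto
      from cov k' obtain p'' where p'': "p'' \<in> V" "k = fst p'' \<or> k = snd p''"
        and u: "\<And>y. y \<in> V \<Longrightarrow> k = fst y \<or> k = snd y \<Longrightarrow> y = p''" by metis
      have "p'' \<noteq> p" using p'' km pj by auto
      then have "p'' \<in> V'" using p'' by (simp add: V'_def)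
      then show "\<exists>!p\<in>V'. k = fst p \<or> k = snd p"
        using p''(2) u unfolding V'_def by (intro ex1I[of _ p'']) blast+
    qed
    moreover have "V = insert (?m, j) V'" using p(1) pj by (auto simp: V'_def)
    ultimately show ?thesis using jJ by blast
  next
    case False
    have "V \<in> P m' (insert ?m J)"
      unfolding P_def
    proof (intro CollectI conjI ballI subsetI)
      fix x assume xV: "x \<in> V"
      have xB: "x \<in> Box ?m J" using xV sub by blast
      have "fst x \<noteq> ?m" using uniq[OF xV] False by auto
      then show "x \<in> Box m' (insert ?m J)" using xB by (auto simp: Box_def)
    next
      fix k assume k: "k \<in> {1..m'} \<union> insert ?m J"
      then have "k \<in> {1..?m} \<union> J" by auto
      then show "\<exists>!p\<in>V. k = fst p \<or> k = snd p" using cov by blast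
    qed
    then show ?thesis by blast
  qed
qed

lemma P_fst: "V \<in> P m K \<Longrightarrow> p \<in> V \<Longrightarrow> 1 \<le> fst p \<and> fst p < snd p \<and> fst p \<le> m \<and> (snd p \<le> m \<or> snd p \<in> K)"
  unfolding P_def Box_def by auto

lemma P_cov: "V \<in> P m K \<Longrightarrow> k \<in> {1..m} \<union> K \<Longrightarrow> \<exists>!p\<in>V. k = fst p \<or> k = snd p"
  unfolding P_def by blast

lemma P_uniq: "V \<in> P m K \<Longrightarrow> k \<in> {1..m} \<union> K \<Longrightarrow> p \<in> V \<Longrightarrow> p' \<in> V \<Longrightarrow>
   k = fst p \<or> k = snd p \<Longrightarrow> k = fst p' \<or> k = snd p' \<Longrightarrow> p = p'"
  unfolding P_def by blast

lemma P_dec2a: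
  assumes J: "\<forall>x\<in>J. Suc m' < x" and j: "j \<in> J" and V': "V' \<in> P m' (J - {j})"
  shows "insert (Suc m', j) V' \<in> P (Suc m') J"
  unfolding P_def
proof (intro CollectI conjI ballI subsetI)
  fix x assume "x \<in> insert (Suc m', j) V'"
  then show "x \<in> Box (Suc m') J"
  proof
    assume "x = (Suc m', j)" then show ?thesis using J j by (auto simp: Box_def)
  next
    assume xv: "x \<in> V'" show ?thesis using P_fst[OF V' xv] unfolding Box_def by (cases x) auto
  qed
next
  fix k assume k: "k \<in> {1..Suc m'} \<union> J"
  have noV': "\<not> (Suc m' = fst p \<or> Suc m' = snd p)" if "p \<in> V'" for p
    using P_fst[OF V' that] J by auto
  have noj: "\<not> (j = fst p \<or> j = snd p)" if "p \<in> V'" for p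
    using P_fst[OF V' that] J j by auto
  show "\<exists>!p\<in>insert (Suc m', j) V'. k = fst p \<or> k = snd p"
  proof (cases "k = Suc m' \<or> k = j")
    case True
    show ?thesis
    proof (rule ex1I[of _ "(Suc m', j)"])
      show "(Suc m', j) \<in> insert (Suc m', j) V' \<and> (k = fst (Suc m', j) \<or> k = snd (Suc m', j))"
        using True by simp
    next
      fix y assume y: "y \<in> insert (Suc m', j) V' \<and> (k = fst y \<or> k = snd y)"
      show "y = (Suc m', j)"
      proof (rule ccontr)
        assume "y \<noteq> (Suc m', j)"
        then have "y \<in> V'" using y by simp
        then show False using noV'[of y] noj[of y] True y by blast
      qed
    qed
  next
    case False
    then have "k \<in> {1..m'} \<union> (J - {j})" using k by auto
    from P_cov[OF V' this] obtain p where p: "p \<in> V'" "k = fst p \<or> k = snd p"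
      and u: "\<And>y. y \<in> V' \<Longrightarrow> k = fst y \<or> k = snd y \<Longrightarrow> y = p" by metis
    show ?thesis
    proof (rule ex1I[of _ p])
      show "p \<in> insert (Suc m', j) V' \<and> (k = fst p \<or> k = snd p)" using p by simp
    next
      fix y assume y: "y \<in> insert (Suc m', j) V' \<and> (k = fst y \<or> k = snd y)"
      have "y \<noteq> (Suc m', j)" using y False by auto
      then have "y \<in> V'" using y by simp
      then show "y = p" using u y by blast
    qed
  qed
qed

lemma P_dec2b:
  assumes V: "V \<in> P m' (insert (Suc m') J)"
  shows "V \<in> P (Suc m') J"
  unfolding P_def
proof (intro CollectI conjI ballI subsetI)
  fix x assume xv: "x \<in> V"
  show "x \<in> Box (Suc m') J" using P_fst[OF V xv] unfolding Box_def by (cases x) auto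
next
  fix k assume "k \<in> {1..Suc m'} \<union> J"
  then have "k \<in> {1..m'} \<union> insert (Suc m') J" by auto
  then show "\<exists>!p\<in>V. k = fst p \<or> k = snd p" by (rule P_cov[OF V])
qed

lemma P_dec:
  assumes J: "\<forall>x\<in>J. Suc m' < x"
  shows "P (Suc m') J = (\<Union>j\<in>J. insert (Suc m', j) ` P m' (J - {j})) \<union> P m' (insert (Suc m') J)"
proof
  show "P (Suc m') J \<subseteq> (\<Union>j\<in>J. insert (Suc m', j) ` P m' (J - {j})) \<union> P m' (insert (Suc m') J)"
    by (rule subsetI, rule P_dec1[OF J])
  show "(\<Union>j\<in>J. insert (Suc m', j) ` P m' (J - {j})) \<union> P m' (insert (Suc m') J) \<subseteq> P (Suc m') J"
  proof (rule subsetI)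
    fix V assume "V \<in> (\<Union>j\<in>J. insert (Suc m', j) ` P m' (J - {j})) \<union> P m' (insert (Suc m') J)"
    then show "V \<in> P (Suc m') J"
    proof
      assume "V \<in> (\<Union>j\<in>J. insert (Suc m', j) ` P m' (J - {j}))"
      then obtain j V' where "j \<in> J" "V' \<in> P m' (J - {j})" "V = insert (Suc m', j) V'" by blast
      then show ?thesis using P_dec2a[OF J] by simp
    next
      assume "V \<in> P m' (insert (Suc m') J)" then show ?thesis by (rule P_dec2b)
    qed
  qed
qed

lemma notin_P: "V \<in> P m' K \<Longrightarrow> (Suc m', j) \<notin> V"
  using P_fst[of V m' K "(Suc m', j)"] by auto

definition ecnt :: "(nat \<times> nat) set \<Rightarrow> nat \<Rightarrow> nat \<Rightarrow> nat" where
  "ecnt V i j = card {p\<in>V. fst p < i \<and> i < snd p} + card {p\<in>V. fst p < i \<and> i < snd p \<and> snd p < j}"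

definition wt :: "real \<Rightarrow> (nat \<Rightarrow> 'a::real_inner) \<Rightarrow> (nat \<times> nat) set \<Rightarrow> real" where
  "wt q f V = (\<Prod>p\<in>V. q ^ ecnt V (fst p) (snd p) * inner (f (fst p)) (f (snd p)))"

lemma cnt_snd:
  assumes V: "V \<in> P m' K" and K: "\<forall>x\<in>K. Suc m' < x"
  shows "card {p\<in>V. fst p < Suc m' \<and> Suc m' < snd p \<and> Q (snd p)} = card {x\<in>K. Q x}"
proof (rule bij_betw_same_card[of snd])
  show "bij_betw snd {p\<in>V. fst p < Suc m' \<and> Suc m' < snd p \<and> Q (snd p)} {x\<in>K. Q x}"
    unfolding bij_betw_def
  proof
    show "inj_on snd {p\<in>V. fst p < Suc m' \<and> Suc m' < snd p \<and> Q (snd p)}"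
    proof (rule inj_onI)
      fix x y assume x: "x \<in> {p\<in>V. fst p < Suc m' \<and> Suc m' < snd p \<and> Q (snd p)}"
        and y: "y \<in> {p\<in>V. fst p < Suc m' \<and> Suc m' < snd p \<and> Q (snd p)}" and e: "snd x = snd y"
      have "snd x \<in> K" using x P_fst[OF V, of x] by auto
      then have "snd x \<in> {1..m'} \<union> K" by simp
      show "x = y" by (rule P_uniq[OF V \<open>snd x \<in> {1..m'} \<union> K\<close>]) (use x y e in auto)
    qed
    show "snd ` {p\<in>V. fst p < Suc m' \<and> Suc m' < snd p \<and> Q (snd p)} = {x\<in>K. Q x}"
    proof
      show "snd ` {p\<in>V. fst p < Suc m' \<and> Suc m' < snd p \<and> Q (snd p)} \<subseteq> {x\<in>K. Q x}"
      proof (rule image_subsetI)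
        fix p assume p: "p \<in> {p\<in>V. fst p < Suc m' \<and> Suc m' < snd p \<and> Q (snd p)}"
        then have pV: "p \<in> V" by simp
        have "snd p \<in> K" using P_fst[OF V pV] p by auto
        then show "snd p \<in> {x\<in>K. Q x}" using p by simp
      qed
      show "{x\<in>K. Q x} \<subseteq> snd ` {p\<in>V. fst p < Suc m' \<and> Suc m' < snd p \<and> Q (snd p)}"
      proof
        fix x assume x: "x \<in> {x\<in>K. Q x}"
        then have "x \<in> {1..m'} \<union> K" by simp
        from P_cov[OF V this] obtain p where p: "p \<in> V" "x = fst p \<or> x = snd p" by blast
        have "x \<in> K" using x by simp
        then have "x = snd p" using p(2) P_fst[OF V p(1)] K by auto
        moreover have "fst p < Suc m'" using P_fst[OF V p(1)] by simp
        ultimately show "x \<in> snd ` {p\<in>V. fst p < Suc m' \<and> Suc m' < snd p \<and> Q (snd p)}"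
          using p(1) \<open>x \<in> K\<close> x K \<open>x = snd p\<close> \<open>fst p < Suc m'\<close> by (intro rev_image_eqI[of p]) auto
      qed
    qed
  qed
qed

lemma ins_filter: "{p\<in>insert (Suc m', j) V'. fst p < Suc m' \<and> R p} = {p\<in>V'. fst p < Suc m' \<and> R p}"
  by auto

lemma ins_filter2: "i \<le> m' \<Longrightarrow> {p\<in>insert (Suc m', j) V'. fst p < i \<and> R p} = {p\<in>V'. fst p < i \<and> R p}"
  by auto

lemma wt_insert:
  assumes J: "\<forall>x\<in>J. Suc m' < x" and j: "j \<in> J" and fJ: "finite J" and V': "V' \<in> P m' (J - {j})"
  shows "wt q f (insert (Suc m', j) V') = q ^ (card (J - {j}) + card {x\<in>J. x < j}) * inner (f (Suc m')) (f j) * wt q f V'"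
proof -
  have fV: "finite V'" using finite_P_mem[OF _ V'] fJ by simp
  have nin: "(Suc m', j) \<notin> V'" by (rule notin_P[OF V'])
  have K: "\<forall>x\<in>J - {j}. Suc m' < x" using J by auto
  have JJ: "{x\<in>J - {j}. True} = J - {j}" by auto
  have e1: "ecnt (insert (Suc m', j) V') (Suc m') j = card (J - {j}) + card {x\<in>J. x < j}"
  proof -
    have "ecnt (insert (Suc m', j) V') (Suc m') j = card {p\<in>V'. fst p < Suc m' \<and> Suc m' < snd p \<and> True}
        + card {p\<in>V'. fst p < Suc m' \<and> Suc m' < snd p \<and> snd p < j}"
      unfolding ecnt_def ins_filter by simp
    also have "\<dots> = card (J - {j}) + card {x\<in>J - {j}. x < j}"
      using cnt_snd[OF V' K, of "\<lambda>_. True"] cnt_snd[OF V' K, of "\<lambda>x. x < j"] unfolding JJ by simp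
    also have "{x\<in>J - {j}. x < j} = {x\<in>J. x < j}" by auto
    finally show ?thesis by simp
  qed
  have e2: "ecnt (insert (Suc m', j) V') (fst p) (snd p) = ecnt V' (fst p) (snd p)" if "p \<in> V'" for p
  proof -
    have "fst p \<le> m'" using P_fst[OF V' that] by simp
    show ?thesis unfolding ecnt_def ins_filter2[OF \<open>fst p \<le> m'\<close>] by (rule refl)
  qed
  have pr: "(\<Prod>p\<in>V'. q ^ ecnt (insert (Suc m', j) V') (fst p) (snd p) * inner (f (fst p)) (f (snd p))) = wt q f V'"
    unfolding wt_def by (rule prod.cong[OF refl]) (simp add: e2)
  show ?thesis
    unfolding wt_def[of q f "insert (Suc m', j) V'"] prod.insert[OF fV nin] pr
    using e1 by simp
qed

lemma dl_filter:
  assumes "distinct js" "k < length js"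
  shows "take k js @ drop (Suc k) js = filter (\<lambda>x. x \<noteq> js ! k) js"
proof -
  have js: "js = take k js @ js ! k # drop (Suc k) js" using assms(2) by (simp add: id_take_nth_drop)
  have d: "distinct (take k js @ js ! k # drop (Suc k) js)" using assms(1) js by metis
  have a: "js ! k \<notin> set (take k js)" "js ! k \<notin> set (drop (Suc k) js)" using d by auto
  have "filter (\<lambda>x. x \<noteq> js ! k) (take k js @ js ! k # drop (Suc k) js) = take k js @ drop (Suc k) js"
  proof -
    have "filter (\<lambda>x. x \<noteq> js ! k) (take k js) = take k js" by (rule filter_True) (use a in blast)
    moreover have "filter (\<lambda>x. x \<noteq> js ! k) (drop (Suc k) js) = drop (Suc k) js" by (rule filter_True) (use a in blast)
    ultimately show ?thesis by simp
  qed
  then show ?thesis using js by metis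
qed

lemma sw_distinct: "sorted_wrt (<) (xs::'a::linorder list) \<Longrightarrow> distinct xs"
  by (induction xs) auto

lemma map_dl: "distinct js \<Longrightarrow> k < length js \<Longrightarrow> take k (map f js) @ drop (Suc k) (map f js) = map f (filter (\<lambda>x. x \<noteq> js ! k) js)"
  by (simp add: take_map drop_map dl_filter[symmetric])

lemma sorted_card:
  fixes js :: "nat list"
  assumes s: "sorted_wrt (<) js" and k: "k < length js"
  shows "card {x\<in>set js. x < js ! k} = k"
proof -
  have lt: "\<And>i j. i < j \<Longrightarrow> j < length js \<Longrightarrow> js ! i < js ! j" using s by (simp add: sorted_wrt_iff_nth_less)
  have d: "distinct js" using s by (rule sw_distinct)
  have "{x\<in>set js. x < js ! k} = set (take k js)"
  proof (intro set_eqI iffI)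
    fix x assume "x \<in> {x\<in>set js. x < js ! k}"
    then obtain i where i: "i < length js" "x = js ! i" "x < js ! k" by (auto simp: in_set_conv_nth)
    have "i < k"
    proof (rule ccontr)
      assume "\<not> i < k"
      then have "k = i \<or> k < i" by auto
      then show False using lt[of k i] i by auto
    qed
    then show "x \<in> set (take k js)" using i by (auto simp: in_set_conv_nth intro!: exI[of _ i])
  next
    fix x assume "x \<in> set (take k js)"
    then obtain i where i: "i < k" "i < length js" "x = js ! i" by (auto simp: in_set_conv_nth)
    then show "x \<in> {x\<in>set js. x < js ! k}" using lt[of i k] k by auto
  qed
  moreover have "card (set (take k js)) = k" using d k by (simp add: distinct_card)
  ultimately show ?thesis by simp
qed

lemma sum_set_nth: "distinct js \<Longrightarrow> (\<Sum>j\<in>set js. g j) = (\<Sum>k<length js. g (js ! k))"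
  by (simp add: sum_list_distinct_conv_sum_set[symmetric] sum_list_sum_nth atLeast0LessThan)

lemma P_sum:
  assumes J: "\<forall>x\<in>J. Suc m' < x" and fJ: "finite J"
  shows "(\<Sum>V\<in>P (Suc m') J. wt q f V) =
     (\<Sum>j\<in>J. q ^ (card (J - {j}) + card {x\<in>J. x < j}) * inner (f (Suc m')) (f j) * (\<Sum>V\<in>P m' (J - {j}). wt q f V))
     + (\<Sum>V\<in>P m' (insert (Suc m') J). wt q f V)"
proof -
  let ?A = "\<lambda>j. insert (Suc m', j) ` P m' (J - {j})"
  have fA: "\<forall>j\<in>J. finite (?A j)" using fJ finite_P by blast
  have dA: "\<forall>i\<in>J. \<forall>j\<in>J. i \<noteq> j \<longrightarrow> ?A i \<inter> ?A j = {}"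
  proof (intro ballI impI)
    fix i j assume "i \<in> J" "j \<in> J" "i \<noteq> j"
    show "?A i \<inter> ?A j = {}"
    proof (rule ccontr)
      assume "?A i \<inter> ?A j \<noteq> {}"
      then obtain V1 V2 where V: "V1 \<in> P m' (J - {i})" "V2 \<in> P m' (J - {j})" "insert (Suc m', i) V1 = insert (Suc m', j) V2"
        by blast
      then have "(Suc m', i) \<in> V2" using \<open>i \<noteq> j\<close> by blast
      then show False using notin_P[OF V(2)] by blast
    qed
  qed
  have fU: "finite (\<Union>j\<in>J. ?A j)" using fA fJ by blast
  have fP: "finite (P m' (insert (Suc m') J))" using fJ finite_P by blast
  have dU: "(\<Union>j\<in>J. ?A j) \<inter> P m' (insert (Suc m') J) = {}"
  proof (rule ccontr)
    assume "(\<Union>j\<in>J. ?A j) \<inter> P m' (insert (Suc m') J) \<noteq> {}"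
    then obtain j V1 where V: "V1 \<in> P m' (J - {j})" "insert (Suc m', j) V1 \<in> P m' (insert (Suc m') J)"
      by blast
    then show False using notin_P[OF V(2), of j] by blast
  qed
  have inj: "inj_on (insert (Suc m', j)) (P m' (J - {j}))" for j
  proof (rule inj_onI)
    fix V1 V2 assume "V1 \<in> P m' (J - {j})" "V2 \<in> P m' (J - {j})" "insert (Suc m', j) V1 = insert (Suc m', j) V2"
    then show "V1 = V2" using notin_P insert_ident by metis
  qed
  have "(\<Sum>V\<in>P (Suc m') J. wt q f V) = (\<Sum>V\<in>(\<Union>j\<in>J. ?A j). wt q f V) + (\<Sum>V\<in>P m' (insert (Suc m') J). wt q f V)"
    unfolding P_dec[OF J] by (rule sum.union_disjoint[OF fU fP dU])
  also have "(\<Sum>V\<in>(\<Union>j\<in>J. ?A j). wt q f V) = (\<Sum>j\<in>J. \<Sum>V\<in>?A j. wt q f V)"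
    by (rule sum.UNION_disjoint[OF fJ fA dA])
  also have "\<dots> = (\<Sum>j\<in>J. q ^ (card (J - {j}) + card {x\<in>J. x < j}) * inner (f (Suc m')) (f j) * (\<Sum>V\<in>P m' (J - {j}). wt q f V))"
  proof (rule sum.cong[OF refl])
    fix j assume j: "j \<in> J"
    have "(\<Sum>V\<in>?A j. wt q f V) = (\<Sum>V\<in>P m' (J - {j}). wt q f (insert (Suc m', j) V))"
      by (simp add: sum.reindex[OF inj])
    also have "\<dots> = (\<Sum>V\<in>P m' (J - {j}). q ^ (card (J - {j}) + card {x\<in>J. x < j}) * inner (f (Suc m')) (f j) * wt q f V)"
      by (rule sum.cong[OF refl]) (rule wt_insert[OF J j fJ])
    finally show "(\<Sum>V\<in>?A j. wt q f V) = q ^ (card (J - {j}) + card {x\<in>J. x < j}) * inner (f (Suc m')) (f j) * (\<Sum>V\<in>P m' (J - {j}). wt q f V)"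
      by (simp add: sum_distrib_left)
  qed
  finally show ?thesis .
qed

lemma W_comb:
  assumes "sorted_wrt (<) js" "\<forall>j\<in>set js. m < j"
  shows "W q f m (map f js) = (\<Sum>V\<in>P m (set js). wt q f V)"
  using assms
proof (induction m arbitrary: js)
  case 0
  show ?case by (simp add: W_0 P_0 om_def wt_def)
next
  case (Suc m')
  let ?J = "set js"
  have d: "distinct js" using Suc.prems(1) by (rule sw_distinct)
  have J: "\<forall>x\<in>?J. Suc m' < x" using Suc.prems(2) by simp
  have IH1: "W q f m' (map f (filter (\<lambda>x. x \<noteq> js ! k) js)) = (\<Sum>V\<in>P m' (?J - {js ! k}). wt q f V)" for k
  proof -
    have "sorted_wrt (<) (filter (\<lambda>x. x \<noteq> js ! k) js)" using Suc.prems(1) by (rule sorted_wrt_filter)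
    moreover have "\<forall>j\<in>set (filter (\<lambda>x. x \<noteq> js ! k) js). m' < j" using J by auto
    moreover have "set (filter (\<lambda>x. x \<noteq> js ! k) js) = ?J - {js ! k}" by auto
    ultimately show ?thesis using Suc.IH by metis
  qed
  have IH2: "W q f m' (f (Suc m') # map f js) = (\<Sum>V\<in>P m' (insert (Suc m') ?J). wt q f V)"
  proof -
    have "sorted_wrt (<) (Suc m' # js)" using Suc.prems(1) J by simp
    moreover have "\<forall>j\<in>set (Suc m' # js). m' < j" using J by auto
    ultimately show ?thesis using Suc.IH[of "Suc m' # js"] by simp
  qed
  have "W q f (Suc m') (map f js) =
     (\<Sum>k<length js. q ^ (length js - 1) * q ^ k * inner (f (js ! k)) (f (Suc m')) * W q f m' (map f (filter (\<lambda>x. x \<noteq> js ! k) js)))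
     + W q f m' (f (Suc m') # map f js)"
    unfolding W_Suc
    by (intro arg_cong2[where f="(+)"] sum.cong refl) (simp_all add: map_dl[OF d])
  also have "\<dots> = (\<Sum>k<length js. (\<lambda>j. q ^ (card (?J - {j}) + card {x\<in>?J. x < j}) * inner (f (Suc m')) (f j) * (\<Sum>V\<in>P m' (?J - {j}). wt q f V)) (js ! k))
     + (\<Sum>V\<in>P m' (insert (Suc m') ?J). wt q f V)"
  proof (intro arg_cong2[where f="(+)"] sum.cong refl IH2)
    fix k assume k: "k \<in> {..<length js}"
    have c1: "card (?J - {js ! k}) = length js - 1" using d k by (simp add: distinct_card)
    have c2: "card {x\<in>?J. x < js ! k} = k" using sorted_card[OF Suc.prems(1)] k by simp
    show "q ^ (length js - 1) * q ^ k * inner (f (js ! k)) (f (Suc m')) * W q f m' (map f (filter (\<lambda>x. x \<noteq> js ! k) js))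
       = (\<lambda>j. q ^ (card (?J - {j}) + card {x\<in>?J. x < j}) * inner (f (Suc m')) (f j) * (\<Sum>V\<in>P m' (?J - {j}). wt q f V)) (js ! k)"
      unfolding IH1 c1 c2 by (simp add: power_add inner_commute)
  qed
  also have "\<dots> = (\<Sum>V\<in>P (Suc m') ?J. wt q f V)"
    unfolding P_sum[OF J finite_set] sum_set_nth[OF d] by (rule refl)
  finally show ?case .
qed

lemma P_pp: "P m {} = pair_partitions m"
proof -
  have B: "Box m {} = {(i, j). 1 \<le> i \<and> i < j \<and> j \<le> m}" by (auto simp: Box_def)
  show ?thesis unfolding P_def pair_partitions_def B by simp
qed

lemma pp_mem: "V \<in> pair_partitions m \<Longrightarrow> p \<in> V \<Longrightarrow> 1 \<le> fst p \<and> fst p < snd p \<and> snd p \<le> m"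
  unfolding pair_partitions_def by auto

lemma pp_finite: "V \<in> pair_partitions m \<Longrightarrow> finite V"
  unfolding pair_partitions_def
  by (rule finite_subset[of _ "{1..m} \<times> {1..m}"]) auto

lemma pp_uniq: "V \<in> pair_partitions m \<Longrightarrow> k \<in> {1..m} \<Longrightarrow> p \<in> V \<Longrightarrow> p' \<in> V \<Longrightarrow>
   k = fst p \<or> k = snd p \<Longrightarrow> k = fst p' \<or> k = snd p' \<Longrightarrow> p = p'"
  unfolding pair_partitions_def by blast

lemma pp_ex: "V \<in> pair_partitions m \<Longrightarrow> k \<in> {1..m} \<Longrightarrow> \<exists>p\<in>V. k = fst p \<or> k = snd p"
  unfolding pair_partitions_def by blast

lemma card_filter_sum: "finite A \<Longrightarrow> card {x\<in>A. Q x} = (\<Sum>x\<in>A. (of_bool (Q x) :: nat))"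
  by (simp add: Int_def conj_commute)

lemma card_pairs:
  assumes "finite V"
  shows "card {((a, b), (c, d)). (a, b) \<in> V \<and> (c, d) \<in> V \<and> R a b c d}
    = (\<Sum>p\<in>V. \<Sum>p'\<in>V. (of_bool (R (fst p) (snd p) (fst p') (snd p')) :: nat))"
proof -
  have "{((a, b), (c, d)). (a, b) \<in> V \<and> (c, d) \<in> V \<and> R a b c d} = {x\<in>V \<times> V. R (fst (fst x)) (snd (fst x)) (fst (snd x)) (snd (snd x))}"
    by auto
  then have "card {((a, b), (c, d)). (a, b) \<in> V \<and> (c, d) \<in> V \<and> R a b c d}
     = (\<Sum>x\<in>V \<times> V. (of_bool (R (fst (fst x)) (snd (fst x)) (fst (snd x)) (snd (snd x))) :: nat))"
    using assms by (simp add: card_filter_sum)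
  also have "\<dots> = (\<Sum>p\<in>V. \<Sum>p'\<in>V. (of_bool (R (fst p) (snd p) (fst p') (snd p')) :: nat))"
    by (simp add: sum.cartesian_product case_prod_beta)
  finally show ?thesis .
qed

lemma pbr_sum: "finite V \<Longrightarrow> pbr V = (\<Sum>p\<in>V. \<Sum>p'\<in>V. (of_bool (fst p < fst p' \<and> fst p' < snd p' \<and> snd p' < snd p) :: nat))"
  unfolding pbr_def by (rule card_pairs)

lemma cr_sum: "finite V \<Longrightarrow> cr V = (\<Sum>p\<in>V. \<Sum>p'\<in>V. (of_bool (fst p < fst p' \<and> fst p' < snd p \<and> snd p < snd p') :: nat))"
  unfolding cr_def by (rule card_pairs)

lemma cr_sum_swap: "finite V \<Longrightarrow> cr V = (\<Sum>p\<in>V. \<Sum>p'\<in>V. (of_bool (fst p' < fst p \<and> fst p < snd p' \<and> snd p' < snd p) :: nat))"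
  unfolding cr_sum by (rule sum.swap)

lemma S1:
  assumes V: "V \<in> pair_partitions m"
  shows "(\<Sum>p\<in>V. \<Sum>p'\<in>V. (of_bool (fst p < fst p' \<and> fst p' < snd p) :: nat)) = pbr V + cr V"
proof -
  have fV: "finite V" by (rule pp_finite[OF V])
  have "(\<Sum>p\<in>V. \<Sum>p'\<in>V. (of_bool (fst p < fst p' \<and> fst p' < snd p) :: nat))
     = (\<Sum>p\<in>V. \<Sum>p'\<in>V. (of_bool (fst p < fst p' \<and> fst p' < snd p' \<and> snd p' < snd p) + of_bool (fst p < fst p' \<and> fst p' < snd p \<and> snd p < snd p') :: nat))"
  proof (intro sum.cong refl)
    fix p p' assume p: "p \<in> V" and p': "p' \<in> V"
    have a: "fst p' < snd p'" "fst p < snd p" "snd p \<le> m" "1 \<le> fst p" using pp_mem[OF V p] pp_mem[OF V p'] by auto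
    have "snd p = snd p' \<Longrightarrow> p = p'" using pp_uniq[OF V _ p p', of "snd p"] a by auto
    then show "(of_bool (fst p < fst p' \<and> fst p' < snd p) :: nat) = of_bool (fst p < fst p' \<and> fst p' < snd p' \<and> snd p' < snd p) + of_bool (fst p < fst p' \<and> fst p' < snd p \<and> snd p < snd p')"
      using a by (cases "snd p' < snd p"; cases "snd p = snd p'") auto
  qed
  also have "\<dots> = pbr V + cr V" by (simp add: sum.distrib pbr_sum[OF fV] cr_sum[OF fV])
  finally show ?thesis .
qed

lemma S2:
  assumes V: "V \<in> pair_partitions m"
  shows "(\<Sum>p\<in>V. \<Sum>p'\<in>V. (of_bool (fst p < snd p' \<and> snd p' < snd p) :: nat)) = pbr V + cr V"
proof -
  have fV: "finite V" by (rule pp_finite[OF V])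
  have "(\<Sum>p\<in>V. \<Sum>p'\<in>V. (of_bool (fst p < snd p' \<and> snd p' < snd p) :: nat))
     = (\<Sum>p\<in>V. \<Sum>p'\<in>V. (of_bool (fst p < fst p' \<and> fst p' < snd p' \<and> snd p' < snd p) + of_bool (fst p' < fst p \<and> fst p < snd p' \<and> snd p' < snd p) :: nat))"
  proof (intro sum.cong refl)
    fix p p' assume p: "p \<in> V" and p': "p' \<in> V"
    have a: "fst p' < snd p'" "fst p < snd p" "snd p \<le> m" "1 \<le> fst p" using pp_mem[OF V p] pp_mem[OF V p'] by auto
    have "fst p = fst p' \<Longrightarrow> p = p'" using pp_uniq[OF V _ p p', of "fst p"] a by auto
    then show "(of_bool (fst p < snd p' \<and> snd p' < snd p) :: nat) = of_bool (fst p < fst p' \<and> fst p' < snd p' \<and> snd p' < snd p) + of_bool (fst p' < fst p \<and> fst p < snd p' \<and> snd p' < snd p)"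
      using a by (cases "fst p' < fst p"; cases "fst p = fst p'") auto
  qed
  also have "\<dots> = pbr V + cr V" by (simp add: sum.distrib pbr_sum[OF fV] cr_sum_swap[OF fV])
  finally show ?thesis .
qed

lemma ecnt_sum:
  assumes V: "V \<in> pair_partitions m"
  shows "(\<Sum>p\<in>V. ecnt V (fst p) (snd p)) = pbr V + 2 * cr V"
proof -
  have fV: "finite V" by (rule pp_finite[OF V])
  have "(\<Sum>p\<in>V. ecnt V (fst p) (snd p)) = (\<Sum>p\<in>V. \<Sum>p'\<in>V. (of_bool (fst p' < fst p \<and> fst p < snd p') :: nat))
     + (\<Sum>p\<in>V. \<Sum>p'\<in>V. (of_bool (fst p' < fst p \<and> fst p < snd p' \<and> snd p' < snd p) :: nat))"
    unfolding ecnt_def by (simp add: card_filter_sum[OF fV] sum.distrib)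
  also have "(\<Sum>p\<in>V. \<Sum>p'\<in>V. (of_bool (fst p' < fst p \<and> fst p < snd p') :: nat))
     = (\<Sum>p\<in>V. \<Sum>p'\<in>V. (of_bool (fst p < fst p' \<and> fst p' < snd p) :: nat))"
    by (rule sum.swap)
  also have "\<dots> = pbr V + cr V" by (rule S1[OF V])
  also have "(\<Sum>p\<in>V. \<Sum>p'\<in>V. (of_bool (fst p' < fst p \<and> fst p < snd p' \<and> snd p' < snd p) :: nat)) = cr V"
    by (rule cr_sum_swap[OF fV, symmetric])
  finally show ?thesis by simp
qed

lemma one_pair:
  assumes V: "V \<in> pair_partitions m" and k: "k \<in> {1..m}"
  shows "(\<Sum>p'\<in>V. (of_bool (fst p' = k) + of_bool (snd p' = k) :: nat)) = 1"
proof -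
  have fV: "finite V" by (rule pp_finite[OF V])
  obtain p0 where p0: "p0 \<in> V" "k = fst p0 \<or> k = snd p0" using pp_ex[OF V k] by blast
  have lt: "fst p0 < snd p0" using pp_mem[OF V p0(1)] by simp
  have "(\<Sum>p'\<in>V. (of_bool (fst p' = k) + of_bool (snd p' = k) :: nat))
     = (of_bool (fst p0 = k) + of_bool (snd p0 = k)) + (\<Sum>p'\<in>V - {p0}. (of_bool (fst p' = k) + of_bool (snd p' = k) :: nat))"
    by (rule sum.remove[OF fV p0(1)])
  also have "(\<Sum>p'\<in>V - {p0}. (of_bool (fst p' = k) + of_bool (snd p' = k) :: nat)) = 0"
  proof (rule sum.neutral, rule ballI)
    fix p' assume p': "p' \<in> V - {p0}"
    have "\<not> (k = fst p' \<or> k = snd p')"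
    proof
      assume "k = fst p' \<or> k = snd p'"
      then have "p0 = p'" using pp_uniq[OF V k p0(1) _ p0(2)] p' by blast
      then show False using p' by blast
    qed
    then show "(of_bool (fst p' = k) + of_bool (snd p' = k) :: nat) = 0" by auto
  qed
  finally show ?thesis using p0(2) lt by auto
qed

lemma ip_eq:
  assumes V: "V \<in> pair_partitions m"
  shows "ip V = 2 * (pbr V + cr V)"
proof -
  have fV: "finite V" by (rule pp_finite[OF V])
  have "ip V = (\<Sum>p\<in>V. snd p - fst p - 1)" unfolding ip_def by (simp add: case_prod_beta)
  also have "\<dots> = (\<Sum>p\<in>V. \<Sum>p'\<in>V. (of_bool (fst p < fst p' \<and> fst p' < snd p) + of_bool (fst p < snd p' \<and> snd p' < snd p) :: nat))"
  proof (rule sum.cong[OF refl])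
    fix p assume p: "p \<in> V"
    have a: "1 \<le> fst p" "fst p < snd p" "snd p \<le> m" using pp_mem[OF V p] by auto
    have "snd p - fst p - 1 = card {fst p<..<snd p}" by simp
    also have "\<dots> = (\<Sum>k\<in>{fst p<..<snd p}. 1)" by simp
    also have "\<dots> = (\<Sum>k\<in>{fst p<..<snd p}. \<Sum>p'\<in>V. (of_bool (fst p' = k) + of_bool (snd p' = k) :: nat))"
      by (rule sum.cong[OF refl]) (use one_pair[OF V] a in auto)
    also have "\<dots> = (\<Sum>p'\<in>V. \<Sum>k\<in>{fst p<..<snd p}. (of_bool (fst p' = k) + of_bool (snd p' = k) :: nat))"
      by (rule sum.swap)
    also have "\<dots> = (\<Sum>p'\<in>V. (of_bool (fst p < fst p' \<and> fst p' < snd p) + of_bool (fst p < snd p' \<and> snd p' < snd p) :: nat))"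
      by (rule sum.cong[OF refl]) (simp add: sum.distrib of_bool_def sum.delta' )
    finally show "snd p - fst p - 1 = (\<Sum>p'\<in>V. (of_bool (fst p < fst p' \<and> fst p' < snd p) + of_bool (fst p < snd p' \<and> snd p' < snd p) :: nat))" .
  qed
  also have "\<dots> = 2 * (pbr V + cr V)" by (simp add: sum.distrib S1[OF V] S2[OF V])
  finally show ?thesis .
qed

lemma wt_pp:
  assumes V: "V \<in> pair_partitions m" and q: "0 \<le> q"
  shows "wt q f V = sqrt q ^ ip V * q ^ cr V * (\<Prod>(i, j)\<in>V. inner (f i) (f j))"
proof -
  have "wt q f V = (\<Prod>p\<in>V. q ^ ecnt V (fst p) (snd p)) * (\<Prod>p\<in>V. inner (f (fst p)) (f (snd p)))"
    unfolding wt_def by (rule prod.distrib)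
  also have "(\<Prod>p\<in>V. q ^ ecnt V (fst p) (snd p)) = q ^ (pbr V + 2 * cr V)"
    unfolding power_sum[symmetric] ecnt_sum[OF V] by (rule refl)
  also have "q ^ (pbr V + 2 * cr V) = sqrt q ^ ip V * q ^ cr V"
  proof -
    have "sqrt q ^ ip V = (sqrt q ^ 2) ^ (pbr V + cr V)" unfolding ip_eq[OF V] power_mult by (rule refl)
    also have "\<dots> = q ^ (pbr V + cr V)" using q by simp
    finally show ?thesis by (simp add: power_add mult_2 mult.assoc)
  qed
  also have "(\<Prod>p\<in>V. inner (f (fst p)) (f (snd p))) = (\<Prod>(i, j)\<in>V. inner (f i) (f j))"
    by (simp add: case_prod_beta)
  finally show ?thesis .
qed

lemma part1:
  assumes q: "0 \<le> q"
  shows "fock_inner q (foldr (Ghat q) (map f [1..<2*n+1]) vac) vac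
          = (\<Sum>V\<in>pair_partitions (2*n). sqrt q ^ ip V * q ^ cr V * (\<Prod>(i, j)\<in>V. inner (f i) (f j)))"
proof -
  have "fock_inner q (foldr (Ghat q) (map f [1..<2*n+1]) vac) vac = W q f (2*n) (map f [])"
    unfolding fock_inner_vac by (simp add: W_def Phi_def vac_def)
  also have "\<dots> = (\<Sum>V\<in>P (2*n) (set []). wt q f V)" by (rule W_comb) auto
  also have "\<dots> = (\<Sum>V\<in>pair_partitions (2*n). wt q f V)" by (simp add: P_pp)
  also have "\<dots> = (\<Sum>V\<in>pair_partitions (2*n). sqrt q ^ ip V * q ^ cr V * (\<Prod>(i, j)\<in>V. inner (f i) (f j)))"
    by (rule sum.cong[OF refl]) (rule wt_pp[OF _ q])
  finally show ?thesis .
qed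

lemma foldr_rep: "foldr g (replicate n a) x = (g a ^^ n) x"
  by (induction n) auto

theorem theorem5:
  fixes q :: real
  assumes "0 \<le> q" and "q \<le> 1"
  shows
    "(\<forall>(n::nat) (f :: nat \<Rightarrow> 'a::{real_inner, complete_space}).
        (\<forall>i\<in>{1..2*n}. norm (f i) = 1) \<longrightarrow>
        fock_inner q (foldr (Ghat q) (map f [1..<2*n+1]) vac) vac
          = (\<Sum>V\<in>pair_partitions (2*n).
               sqrt q ^ ip V * q ^ cr V * (\<Prod>(i, j)\<in>V. inner (f i) (f j))))
   \<and> (\<forall>(n::nat) (f :: 'a) (\<mu> :: real measure).
        norm f = 1 \<longrightarrow> 1 \<le> n \<longrightarrow> is_muI q \<mu> \<longrightarrow>
          (\<integral>x. x ^ (2*n) \<partial>\<mu>) = fock_inner q ((Ghat q f ^^ (2*n)) vac) vac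
        \<and> fock_inner q ((Ghat q f ^^ (2*n)) vac) vac = (\<Prod>k\<in>{1..n}. qint q (2*k - 1))
        \<and> (\<Prod>k\<in>{1..n}. qint q (2*k - 1)) = (\<Sum>V\<in>pair_partitions (2*n). q ^ (pbr V + 2 * cr V))
        \<and> (\<forall>V\<in>pair_partitions (2*n). real (pbr V + 2 * cr V) = real (ip V) / 2 + real (cr V)))
   \<and> (\<forall>(f :: 'a) g (u :: 'a fock).
        fock_null q
          (fock_diff (fock_diff (ann q f (cre g u)) (fock_scale (q^2) (cre g (ann q f u))))
                     (fock_scale (inner f g) (qN q u))))"
proof (intro conjI allI impI ballI)
  fix n :: nat and f :: "nat \<Rightarrow> 'a"
  show "fock_inner q (foldr (Ghat q) (map f [1..<2*n+1]) vac) vac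
          = (\<Sum>V\<in>pair_partitions (2*n). sqrt q ^ ip V * q ^ cr V * (\<Prod>(i, j)\<in>V. inner (f i) (f j)))"
    by (rule part1[OF assms(1)])
next
  fix n :: nat and f :: 'a and \<mu> :: "real measure"
  assume f: "norm f = 1" and mu: "is_muI q \<mu>"
  show "(\<integral>x. x ^ (2*n) \<partial>\<mu>) = fock_inner q ((Ghat q f ^^ (2*n)) vac) vac"
    by (rule moment_eq[OF mu assms(1) f])
  show "fock_inner q ((Ghat q f ^^ (2*n)) vac) vac = (\<Prod>k\<in>{1..n}. qint q (2*k - 1))"
    by (rule fock_moment[OF f assms(1)])
  have ff: "inner f f = 1" using f by (simp add: power2_norm_eq_inner[symmetric])
  have "fock_inner q ((Ghat q f ^^ (2*n)) vac) vac = fock_inner q (foldr (Ghat q) (map (\<lambda>_. f) [1..<2*n+1]) vac) vac"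
  proof -
    have "map (\<lambda>_. f) [1..<2*n+1] = replicate (2*n) f" by (simp add: map_replicate_const)
    then show ?thesis by (simp add: foldr_rep)
  qed
  also have "\<dots> = (\<Sum>V\<in>pair_partitions (2*n). sqrt q ^ ip V * q ^ cr V * (\<Prod>(i, j)\<in>V. inner f f))"
    by (rule part1[OF assms(1)])
  also have "\<dots> = (\<Sum>V\<in>pair_partitions (2*n). q ^ (pbr V + 2 * cr V))"
  proof (rule sum.cong[OF refl])
    fix V assume V: "V \<in> pair_partitions (2*n)"
    have "sqrt q ^ ip V = q ^ (pbr V + cr V)"
    proof -
      have "sqrt q ^ ip V = (sqrt q ^ 2) ^ (pbr V + cr V)" unfolding ip_eq[OF V] power_mult by (rule refl)
      then show ?thesis using assms(1) by simp
    qed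
    then show "sqrt q ^ ip V * q ^ cr V * (\<Prod>(i, j)\<in>V. inner f f) = q ^ (pbr V + 2 * cr V)"
      by (simp add: ff power_add mult_2 mult.assoc)
  qed
  finally show "(\<Prod>k\<in>{1..n}. qint q (2*k - 1)) = (\<Sum>V\<in>pair_partitions (2*n). q ^ (pbr V + 2 * cr V))"
    using fock_moment[OF f assms(1)] by simp
next
  fix n :: nat and V
  assume V: "V \<in> pair_partitions (2*n)"
  show "real (pbr V + 2 * cr V) = real (ip V) / 2 + real (cr V)"
    using ip_eq[OF V] by simp
next
  fix f g :: 'a and u :: "'a fock"
  show "fock_null q (fock_diff (fock_diff (ann q f (cre g u)) (fock_scale (q^2) (cre g (ann q f u))))
                     (fock_scale (inner f g) (qN q u)))"
    by (rule part3)
qed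

end
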